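(* (Fundamental Theorem of Calculus for piecewise continuous functions) For every $u\in\mathfrak{U}(\mathbb{R})$ and every $\gamma_n<\gamma_m$ in $\Gamma$, $$\int_{\gamma_n}^{\gamma_m}D_2u(x)\,dx=\sum_{i=n}^{m-1}\left[u^-(\gamma_{i+1})-u^+(\gamma_i)\right].$$
   Context: Framework (Λ-limits / nonstandard analysis): $\mathfrak{X}=\mathcal{P}_{fin}(\mathfrak{F}(\mathbb{R},\mathbb{R}))$ directed by inclusion; $\mathbb{R}^*\supset\mathbb{R}$ is a non-Archimedean ordered field of Λ-limits of nets $\mathfrak{X}\to\mathbb{R}$; internal sets/functions, natural extensions $E^*,f^*$, hyperfinite sums are defined via Λ-limits; for internal $u$, $\int_a^bu\,dx$ means $(\int_a^b)^*u\,dx$. For $\lambda\in\mathfrak{X}$, $V_\lambda$ is the span of $\lambda$; an internal $u=\lim_{\lambda\uparrow\Lambda}u_\lambda$ is an ultrafunction if $u_\lambda\in V_\lambda$ for all $\lambda$; for a vector space $W$ of real functions, $\widetilde{W}=W^*\cap\{\text{ultrafunctions}\}$. Grid: a positive infinite $\beta\in\mathbb{R}^*$, a hyperfinite $\Gamma=\{\gamma_0<\dots<\gamma_\ell\}\subset\mathbb{R}^*$ with $\gamma_0=-\beta$, $\gamma_\ell=\beta$, $0<\gamma_{j+1}-\gamma_j<\eta$ for a fixed infinitesimal $\eta$, and $\mathbb{R}\subseteq\Gamma$; $\mathbb{I}_j=(\gamma_j,\gamma_{j+1})_{\mathbb{R}^*}$ with characteristic function $\chi_j$. $\mathfrak{U}(\mathbb{R})$: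 functions $u:[-\beta,\beta]\to\mathbb{R}^*$ of the form $\sum_{j=0}^{\ell-1}v_j\chi_j$ with $v_j\in\widetilde{\mathcal{C}^1(\mathbb{R})}$, with the $L^2$ inner product $\int^*uv$; $u^\pm(\gamma_j)$ are the internal one-sided limits of $u$ at grid points. For $u=\sum_jv_j\chi_j\in\mathfrak{U}(\mathbb{R})$, $u'=\sum_jv_j'\chi_j$ (piecewise derivative) and $D_2u=P_{\mathfrak{U}}(u')$, where $P_{\mathfrak{U}}$ is the orthogonal projection onto $\mathfrak{U}(\mathbb{R})$ in $[L^2(\mathbb{R})]^*$. *)

theory Defs
  imports "HOL-Analysis.Analysis"
begin

text \<open>Index set X = P_fin(F(R,R)); an internal object is represented by a net
  X -> (standard object); its Lambda-limit is determined by a fine ultrafilter L on X.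
  Two Lambda-limits are equal iff the nets agree L-eventually.\<close>

type_synonym idx = "(real \<Rightarrow> real) set"

definition fine_ultra :: "idx filter \<Rightarrow> bool" where
  "fine_ultra L \<longleftrightarrow> L \<noteq> bot
     \<and> (\<forall>P. eventually P L \<or> eventually (\<lambda>x. \<not> P x) L)
     \<and> eventually finite L
     \<and> (\<forall>\<mu>. finite \<mu> \<longrightarrow> eventually (\<lambda>lam. \<mu> \<subseteq> lam) L)"

definition Vspan :: "idx \<Rightarrow> (real \<Rightarrow> real) set" where
  "Vspan lam = {f. \<exists>c. f = (\<lambda>x. \<Sum>h\<in>lam. c h * h x)}"

definition chi :: "(nat \<Rightarrow> real) \<Rightarrow> nat \<Rightarrow> real \<Rightarrow> real" where
  "chi g j x = indicator {g j<..<g (Suc j)} x"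

definition pw :: "(nat \<Rightarrow> real) \<Rightarrow> nat \<Rightarrow> (nat \<Rightarrow> real \<Rightarrow> real) \<Rightarrow> real \<Rightarrow> real" where
  "pw g l v x = (\<Sum>j<l. v j x * chi g j x)"

definition Uspace :: "idx \<Rightarrow> (nat \<Rightarrow> real) \<Rightarrow> nat \<Rightarrow> (real \<Rightarrow> real) set" where
  "Uspace lam g l = {pw g l w | w. \<forall>j<l. w j \<in> Vspan lam \<and> w j C1_differentiable_on UNIV}"

definition pw_deriv :: "(nat \<Rightarrow> real) \<Rightarrow> nat \<Rightarrow> (nat \<Rightarrow> real \<Rightarrow> real) \<Rightarrow> real \<Rightarrow> real" where
  "pw_deriv g l v = pw g l (\<lambda>j. deriv (v j))"

definition L2proj :: "(real \<Rightarrow> real) set \<Rightarrow> (real \<Rightarrow> real) \<Rightarrow> real \<Rightarrow> real" where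
  "L2proj U f = (THE w. w \<in> U \<and> (\<forall>z\<in>U. integral UNIV (\<lambda>x. (f x - w x) * z x) = 0))"

definition D2 :: "idx \<Rightarrow> (nat \<Rightarrow> real) \<Rightarrow> nat \<Rightarrow> (nat \<Rightarrow> real \<Rightarrow> real) \<Rightarrow> real \<Rightarrow> real" where
  "D2 lam g l v = L2proj (Uspace lam g l) (pw_deriv g l v)"

text \<open>Grid: beta positive infinite, eta positive infinitesimal, Gamma = {g 0 < ... < g l}
  hyperfinite with g 0 = -beta, g l = beta, gaps in (0, eta), and R subset Gamma.\<close>
definition hgrid :: "idx filter \<Rightarrow> (idx \<Rightarrow> real) \<Rightarrow> (idx \<Rightarrow> real) \<Rightarrow> (idx \<Rightarrow> nat)
    \<Rightarrow> (idx \<Rightarrow> nat \<Rightarrow> real) \<Rightarrow> bool" where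
  "hgrid L beta eta l g \<longleftrightarrow>
     (\<forall>r::real. eventually (\<lambda>lam. r < beta lam) L)
   \<and> (\<forall>e::real. e > 0 \<longrightarrow> eventually (\<lambda>lam. 0 < eta lam \<and> eta lam < e) L)
   \<and> eventually (\<lambda>lam. g lam 0 = - beta lam \<and> g lam (l lam) = beta lam
        \<and> (\<forall>j<l lam. 0 < g lam (Suc j) - g lam j \<and> g lam (Suc j) - g lam j < eta lam)) L
   \<and> (\<forall>r::real. eventually (\<lambda>lam. \<exists>j\<le>l lam. g lam j = r) L)"

end

theory Submission
  imports Defs "HOL-Analysis.Analysis"
begin


definition ip :: "(real\<Rightarrow>real) \<Rightarrow> (real\<Rightarrow>real) \<Rightarrow> real" where
  "ip x y = integral UNIV (\<lambda>t. x t * y t)"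
definition sp :: "('i \<Rightarrow> real \<Rightarrow> real) \<Rightarrow> 'i set \<Rightarrow> (real \<Rightarrow> real) set" where
  "sp B I = {h. \<exists>c. h = (\<lambda>t. \<Sum>i\<in>I. c i * B i t)}"
definition subsp :: "(real\<Rightarrow>real) set \<Rightarrow> bool" where
  "subsp U \<longleftrightarrow> (\<lambda>_. 0) \<in> U \<and> (\<forall>x\<in>U. \<forall>y\<in>U. (\<lambda>t. x t + y t) \<in> U) \<and> (\<forall>x\<in>U. \<forall>a. (\<lambda>t. a * x t) \<in> U)"
definition Gset :: "(real\<Rightarrow>real) set \<Rightarrow> (real\<Rightarrow>real) set" where
  "Gset U = {h. \<forall>z\<in>U. (\<lambda>t. h t * z t) integrable_on UNIV}"
definition defin :: "(real\<Rightarrow>real) set \<Rightarrow> bool" where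
  "defin U \<longleftrightarrow> (\<forall>u\<in>U. ip u u = 0 \<longrightarrow> u = (\<lambda>_. 0))"

lemma icm: "f integrable_on S \<Longrightarrow> (\<lambda>x. (c::real) * f x) integrable_on S"
  using integrable_on_cmult_left[of f S c] by simp

lemma subsp_diff: "subsp U \<Longrightarrow> x \<in> U \<Longrightarrow> y \<in> U \<Longrightarrow> (\<lambda>t. x t - c * y t) \<in> U"
proof -
  assume a: "subsp U" "x \<in> U" "y \<in> U"
  then have yc: "(\<lambda>t. (-c) * y t) \<in> U" unfolding subsp_def by blast
  have add: "\<forall>x\<in>U. \<forall>y\<in>U. (\<lambda>t. x t + y t) \<in> U" using a(1) unfolding subsp_def by blast
  have "(\<lambda>t. x t + (\<lambda>t. (-c) * y t) t) \<in> U" using bspec[OF bspec[OF add a(2)] yc] .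
  then show ?thesis by simp
qed

lemma subsp_add: "subsp U \<Longrightarrow> x \<in> U \<Longrightarrow> y \<in> U \<Longrightarrow> (\<lambda>t. x t + c * y t) \<in> U"
  using subsp_diff[of U x y "-c"] by simp

lemma Gset_mono: "U' \<subseteq> U \<Longrightarrow> Gset U \<subseteq> Gset U'"
  by (auto simp: Gset_def)

lemma Gset_diff: "x \<in> Gset U \<Longrightarrow> y \<in> Gset U \<Longrightarrow> (\<lambda>t. x t - c * y t) \<in> Gset U"
proof -
  assume a: "x \<in> Gset U" "y \<in> Gset U"
  show ?thesis unfolding Gset_def mem_Collect_eq
  proof
    fix z assume z: "z \<in> U"
    have "(\<lambda>t. x t * z t - c * (y t * z t)) integrable_on UNIV"
      using a z by (intro integrable_diff icm) (auto simp: Gset_def)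
    then show "(\<lambda>t. (x t - c * y t) * z t) integrable_on UNIV"
      by (simp add: algebra_simps)
  qed
qed

lemma ip_lin1: "x \<in> Gset U \<Longrightarrow> y \<in> Gset U \<Longrightarrow> z \<in> U \<Longrightarrow>
   ip (\<lambda>t. x t - c * y t) z = ip x z - c * ip y z"
proof -
  assume a: "x \<in> Gset U" "y \<in> Gset U" "z \<in> U"
  have i1: "(\<lambda>t. x t * z t) integrable_on UNIV" "(\<lambda>t. y t * z t) integrable_on UNIV"
    using a by (auto simp: Gset_def)
  have "ip (\<lambda>t. x t - c * y t) z = integral UNIV (\<lambda>t. x t * z t - c * (y t * z t))"
    unfolding ip_def by (simp add: algebra_simps)
  also have "\<dots> = ip x z - c * ip y z"
    unfolding ip_def using integral_diff[OF i1(1) icm[OF i1(2)]] by simp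
  finally show ?thesis .
qed

lemma ip_lin2: "x \<in> Gset U \<Longrightarrow> e \<in> U \<Longrightarrow> y \<in> U \<Longrightarrow>
   ip x (\<lambda>t. a * e t + y t) = a * ip x e + ip x y"
proof -
  assume a: "x \<in> Gset U" "e \<in> U" "y \<in> U"
  have i1: "(\<lambda>t. x t * e t) integrable_on UNIV" "(\<lambda>t. x t * y t) integrable_on UNIV"
    using a by (auto simp: Gset_def)
  have "ip x (\<lambda>t. a * e t + y t) = integral UNIV (\<lambda>t. a * (x t * e t) + x t * y t)"
    unfolding ip_def by (simp add: algebra_simps)
  also have "\<dots> = a * ip x e + ip x y"
    unfolding ip_def using integral_add[OF icm[OF i1(1)] i1(2)] by simp
  finally show ?thesis .
qed

lemma ip_comm: "ip x y = ip y x"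
  unfolding ip_def by (simp add: mult.commute)

lemma sp_subsp: "subsp (sp B I)"
proof -
  have 0: "(\<lambda>_. 0) \<in> sp B I" unfolding sp_def mem_Collect_eq
    by (rule exI[of _ "\<lambda>_. 0"]) simp
  have 1: "(\<lambda>t. x t + y t) \<in> sp B I" if xs: "x \<in> sp B I" and ys: "y \<in> sp B I" for x y
  proof -
    obtain c where "x = (\<lambda>t. \<Sum>i\<in>I. c i * B i t)"
      using xs unfolding sp_def by blast
    moreover obtain d where "y = (\<lambda>t. \<Sum>i\<in>I. d i * B i t)"
      using ys unfolding sp_def by blast
    ultimately show ?thesis unfolding sp_def mem_Collect_eq
      by (intro exI[of _ "\<lambda>i. c i + d i"]) (simp add: sum.distrib algebra_simps)
  qed
  have 2: "(\<lambda>t. a * x t) \<in> sp B I" if xs: "x \<in> sp B I" for x a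
  proof -
    obtain c where "x = (\<lambda>t. \<Sum>i\<in>I. c i * B i t)"
      using xs unfolding sp_def by blast
    then show ?thesis unfolding sp_def mem_Collect_eq
      by (intro exI[of _ "\<lambda>i. a * c i"]) (simp add: sum_distrib_left algebra_simps)
  qed
  show ?thesis unfolding subsp_def using 0 1 2 by blast
qed

lemma subsp_Int: "subsp U \<Longrightarrow> subsp V \<Longrightarrow> subsp (U \<inter> V)"
  unfolding subsp_def by blast

lemma proj_exists_aux:
  assumes "finite I"
  shows "\<forall>U. subsp U \<longrightarrow> U \<subseteq> sp B I \<longrightarrow> U \<subseteq> Gset U \<longrightarrow> defin U \<longrightarrow>
     (\<forall>f\<in>Gset U. \<exists>w\<in>U. \<forall>z\<in>U. ip (\<lambda>t. f t - w t) z = 0)"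
  using assms
proof (induction I rule: finite_induct)
  case empty
  show ?case
  proof (intro allI impI ballI)
    fix U f assume U: "subsp U" "U \<subseteq> sp B {}"
    show "\<exists>w\<in>U. \<forall>z\<in>U. ip (\<lambda>t. f t - w t) z = 0"
    proof (intro bexI[of _ "\<lambda>_. 0"] ballI)
      fix z assume "z \<in> U"
      with U have "z = (\<lambda>_. 0)" by (auto simp: sp_def)
      then show "ip (\<lambda>t. f t - 0) z = 0" by (simp add: ip_def)
    qed (use U in \<open>auto simp: subsp_def\<close>)
  qed
next
  case (insert s I)
  show ?case
  proof (intro allI impI ballI)
    fix U f assume U: "subsp U" "U \<subseteq> sp B (insert s I)" "U \<subseteq> Gset U" "defin U" and f: "f \<in> Gset U"
    define U' where "U' = U \<inter> sp B I"
    have U'sub: "U' \<subseteq> U" by (auto simp: U'_def)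
    have GG: "Gset U \<subseteq> Gset U'" using U'sub by (rule Gset_mono)
    have U': "subsp U'" "U' \<subseteq> sp B I" "U' \<subseteq> Gset U'" "defin U'"
      using U U'sub GG by (auto simp: U'_def defin_def intro: subsp_Int sp_subsp)
    have IH: "\<forall>f\<in>Gset U'. \<exists>w\<in>U'. \<forall>z\<in>U'. ip (\<lambda>t. f t - w t) z = 0"
      using insert.IH U' by blast
    show "\<exists>w\<in>U. \<forall>z\<in>U. ip (\<lambda>t. f t - w t) z = 0"
    proof (cases "U \<subseteq> sp B I")
      case True
      then have "U' = U" by (auto simp: U'_def)
      then show ?thesis using IH f by simp
    next
      case False
      then obtain u0 where u0: "u0 \<in> U" "u0 \<notin> sp B I" by auto
      from u0 U obtain c0 where c0: "u0 = (\<lambda>t. \<Sum>i\<in>insert s I. c0 i * B i t)" by (auto simp: sp_def)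
      have c0e: "u0 = (\<lambda>t. c0 s * B s t + (\<Sum>i\<in>I. c0 i * B i t))"
        using c0 insert.hyps by simp
      have c0s: "c0 s \<noteq> 0"
      proof
        assume "c0 s = 0"
        then have "u0 \<in> sp B I" using c0e by (auto simp: sp_def)
        with u0 show False by simp
      qed
      have decomp: "\<exists>a. (\<lambda>t. z t - a * u0 t) \<in> U'" if z: "z \<in> U" for z
      proof -
        from z U obtain c where c: "z = (\<lambda>t. \<Sum>i\<in>insert s I. c i * B i t)" by (auto simp: sp_def)
        have ce: "z = (\<lambda>t. c s * B s t + (\<Sum>i\<in>I. c i * B i t))"
          using c insert.hyps by simp
        define a where "a = c s / c0 s"
        have "(\<lambda>t. z t - a * u0 t) = (\<lambda>t. \<Sum>i\<in>I. (c i - a * c0 i) * B i t)"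
          using c0s unfolding ce c0e a_def
          by (auto simp: sum_subtractf sum_distrib_left algebra_simps)
        then have "(\<lambda>t. z t - a * u0 t) \<in> sp B I" by (auto simp: sp_def)
        moreover have "(\<lambda>t. z t - a * u0 t) \<in> U" using subsp_diff[OF U(1) z u0(1)] .
        ultimately show ?thesis unfolding U'_def by blast
      qed
      have u0G: "u0 \<in> Gset U" using U u0 by auto
      obtain p0 where p0: "p0 \<in> U'" "\<forall>z\<in>U'. ip (\<lambda>t. u0 t - p0 t) z = 0"
        using IH u0G GG by blast
      define e where "e = (\<lambda>t. u0 t - p0 t)"
      have eU: "e \<in> U" unfolding e_def using subsp_diff[OF U(1) u0(1), of p0 1] p0 U'sub by auto
      have ee: "ip e e \<noteq> 0"
      proof
        assume "ip e e = 0"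
        then have e0: "e = (\<lambda>_. 0)" using U(4) eU unfolding defin_def by blast
        have "u0 = p0"
        proof
          fix t show "u0 t = p0 t" using fun_cong[OF e0, of t] unfolding e_def by simp
        qed
        with p0 u0 show False by (auto simp: U'_def)
      qed
      have fG': "f \<in> Gset U'" using f GG by auto
      obtain w' where w': "w' \<in> U'" "\<forall>z\<in>U'. ip (\<lambda>t. f t - w' t) z = 0"
        using IH fG' by blast
      define c where "c = ip (\<lambda>t. f t - w' t) e / ip e e"
      define w where "w = (\<lambda>t. w' t + c * e t)"
      have wU: "w \<in> U" unfolding w_def using subsp_add[OF U(1) _ eU] w' U'sub by auto
      have eG: "e \<in> Gset U" using eU U by auto
      have fw'G: "(\<lambda>t. f t - w' t) \<in> Gset U" using Gset_diff[OF f, of w' 1] w' U'sub U by auto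
      have fwe: "(\<lambda>t. f t - w t) = (\<lambda>t. (f t - w' t) - c * e t)" unfolding w_def by auto
      have fwG: "(\<lambda>t. f t - w t) \<in> Gset U" unfolding fwe using Gset_diff[OF fw'G eG] by simp
      show ?thesis
      proof (intro bexI[OF _ wU] ballI)
        fix z assume z: "z \<in> U"
        obtain a where a: "(\<lambda>t. z t - a * u0 t) \<in> U'" using decomp[OF z] by blast
        define y2 where "y2 = (\<lambda>t. (z t - a * u0 t) + a * p0 t)"
        have y2U': "y2 \<in> U'" unfolding y2_def using subsp_add[OF U'(1) a p0(1)] .
        have y2U: "y2 \<in> U" using y2U' U'sub by auto
        have zeq: "z = (\<lambda>t. a * e t + y2 t)" unfolding y2_def e_def by (auto simp: algebra_simps)
        have "ip (\<lambda>t. f t - w t) z = a * ip (\<lambda>t. f t - w t) e + ip (\<lambda>t. f t - w t) y2"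
          unfolding zeq using ip_lin2[OF fwG eU y2U] .
        also have "ip (\<lambda>t. f t - w t) e = 0"
        proof -
          have "ip (\<lambda>t. f t - w t) e = ip (\<lambda>t. f t - w' t) e - c * ip e e"
            unfolding fwe using ip_lin1[OF fw'G eG eU, of c] .
          also have "\<dots> = 0" using ee by (simp add: c_def)
          finally show ?thesis .
        qed
        also have "ip (\<lambda>t. f t - w t) y2 = 0"
        proof -
          have "ip (\<lambda>t. f t - w t) y2 = ip (\<lambda>t. f t - w' t) y2 - c * ip e y2"
            unfolding fwe using ip_lin1[OF fw'G eG y2U] .
          moreover have "ip (\<lambda>t. f t - w' t) y2 = 0" using w' y2U' by blast
          moreover have "ip e y2 = 0" using p0 y2U' unfolding e_def by blast
          ultimately show ?thesis by simp
        qed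
        finally show "ip (\<lambda>t. f t - w t) z = 0" by simp
      qed
    qed
  qed
qed

lemma proj_unique:
  assumes U: "subsp U" "U \<subseteq> Gset U" "defin U" and f: "f \<in> Gset U"
    and w1: "w1 \<in> U" "\<forall>z\<in>U. ip (\<lambda>t. f t - w1 t) z = 0"
    and w2: "w2 \<in> U" "\<forall>z\<in>U. ip (\<lambda>t. f t - w2 t) z = 0"
  shows "w1 = w2"
proof -
  define d where "d = (\<lambda>t. w1 t - w2 t)"
  have dU: "d \<in> U" unfolding d_def using subsp_diff[OF U(1) w1(1) w2(1), of 1] by simp
  have g1: "(\<lambda>t. f t - w1 t) \<in> Gset U" using Gset_diff[OF f, of w1 1] w1 U by auto
  have g2: "(\<lambda>t. f t - w2 t) \<in> Gset U" using Gset_diff[OF f, of w2 1] w2 U by auto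
  have deq: "(\<lambda>t. (f t - w2 t) - 1 * (f t - w1 t)) = d" unfolding d_def by auto
  have "ip d d = ip (\<lambda>t. f t - w2 t) d - 1 * ip (\<lambda>t. f t - w1 t) d"
    using ip_lin1[OF g2 g1 dU, of 1] unfolding deq .
  then have "ip d d = 0" using w1 w2 dU by simp
  then have d0: "d = (\<lambda>_. 0)" using U(3) dU unfolding defin_def by blast
  show ?thesis
  proof
    fix t show "w1 t = w2 t" using fun_cong[OF d0, of t] unfolding d_def by simp
  qed
qed

lemma L2proj_char:
  assumes "finite I" "subsp U" "U \<subseteq> sp B I" "U \<subseteq> Gset U" "defin U" "f \<in> Gset U"
  shows "L2proj U f \<in> U \<and> (\<forall>z\<in>U. ip (\<lambda>t. f t - L2proj U f t) z = 0)"
proof -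
  obtain w where w: "w \<in> U" "\<forall>z\<in>U. ip (\<lambda>t. f t - w t) z = 0"
    using proj_exists_aux[OF assms(1)] assms by blast
  have "L2proj U f = w"
    unfolding L2proj_def
  proof (rule the_equality)
    show "w \<in> U \<and> (\<forall>z\<in>U. integral UNIV (\<lambda>x. (f x - w x) * z x) = 0)" using w by (simp add: ip_def)
  next
    fix w2 assume "w2 \<in> U \<and> (\<forall>z\<in>U. integral UNIV (\<lambda>x. (f x - w2 x) * z x) = 0)"
    then show "w2 = w" using proj_unique[OF assms(2,4,5,6) _ _ w] by (simp add: ip_def)
  qed
  then show ?thesis using w by simp
qed



lemma int_ind:
  fixes c :: "real \<Rightarrow> real"
  assumes "continuous_on UNIV c"
  shows "(\<lambda>t. c t * indicator {p<..<q} t) integrable_on UNIV"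
    "integral UNIV (\<lambda>t. c t * indicator {p<..<q} t) = integral {p..q} c"
proof -
  have e: "(\<lambda>t. c t * indicator {p<..<q} t) = (\<lambda>t. if t \<in> {p<..<q} then c t else 0)"
    by (rule ext) (simp add: indicator_def)
  have "c integrable_on {p..q}"
    by (rule integrable_continuous_real) (use assms continuous_on_subset in blast)
  then show "(\<lambda>t. c t * indicator {p<..<q} t) integrable_on UNIV"
    unfolding e integrable_restrict_UNIV integrable_on_open_interval_real .
  show "integral UNIV (\<lambda>t. c t * indicator {p<..<q} t) = integral {p..q} c"
    unfolding e integral_restrict_UNIV integral_open_interval_real ..
qed

lemma chi_int:
  assumes "continuous_on UNIV c"
  shows "(\<lambda>t. c t * chi g j t) integrable_on UNIV"
    "integral UNIV (\<lambda>t. c t * chi g j t) = integral {g j..g (Suc j)} c"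
  using int_ind[OF assms] unfolding chi_def by auto

lemma pw_int2:
  assumes "\<forall>j<l. continuous_on UNIV (a j)" "\<forall>j<l. continuous_on UNIV (b j)"
  shows "(\<lambda>t. pw g l a t * pw g l b t) integrable_on UNIV"
proof -
  have e: "(\<lambda>t. pw g l a t * pw g l b t) = (\<lambda>t. \<Sum>j<l. \<Sum>k<l. (a j t * b k t) *
     indicator {max (g j) (g k)<..<min (g (Suc j)) (g (Suc k))} t)"
  proof
    fix t
    have "pw g l a t * pw g l b t = (\<Sum>j<l. \<Sum>k<l. (a j t * chi g j t) * (b k t * chi g k t))"
      unfolding pw_def by (rule sum_product)
    also have "\<dots> = (\<Sum>j<l. \<Sum>k<l. (a j t * b k t) *
     indicator {max (g j) (g k)<..<min (g (Suc j)) (g (Suc k))} t)"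
      by (intro sum.cong refl) (auto simp: chi_def indicator_def)
    finally show "pw g l a t * pw g l b t = \<dots>" .
  qed
  show ?thesis unfolding e
    using assms by (intro integrable_sum int_ind continuous_intros) (auto intro: continuous_on_mult)
qed

lemma gmono:
  assumes "\<forall>j<l. g j < g (Suc j)"
  shows "i < j \<Longrightarrow> j \<le> l \<Longrightarrow> g i < (g j :: real)"
proof (induction j)
  case 0 then show ?case by simp
next
  case (Suc j)
  have s: "g j < g (Suc j)" using assms Suc.prems by auto
  show ?case
  proof (cases "i = j")
    case True then show ?thesis using s by simp
  next
    case False
    then have "g i < g j" using Suc by simp
    then show ?thesis using s by simp
  qed
qed

lemma chi_other:
  assumes mono: "\<forall>j<l. g j < g (Suc j)" and "j < l" "k < l" "k \<noteq> j" "chi g j t \<noteq> 0"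
  shows "chi g k t = 0"
proof -
  have t: "g j < t" "t < g (Suc j)" using assms(5) by (auto simp: chi_def indicator_def split: if_splits)
  show ?thesis
  proof (cases "k < j")
    case True
    then have "g (Suc k) \<le> g j" using gmono[OF mono, of "Suc k" j] assms
      by (cases "Suc k = j") auto
    then show ?thesis using t by (auto simp: chi_def indicator_def)
  next
    case False
    then have "j < k" using assms by auto
    then have "g (Suc j) \<le> g k" using gmono[OF mono, of "Suc j" k] assms
      by (cases "Suc j = k") auto
    then show ?thesis using t by (auto simp: chi_def indicator_def)
  qed
qed

lemma pw_chi:
  assumes mono: "\<forall>j<l. g j < g (Suc j)" and j: "j < l"
  shows "pw g l a t * chi g j t = a j t * chi g j t"
proof (cases "chi g j t = 0")
  case True then show ?thesis by simp
next
  case False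
  have c1: "chi g j t = 1" using False by (auto simp: chi_def indicator_def)
  have "pw g l a t = (\<Sum>k<l. if k = j then a j t else 0)"
    unfolding pw_def
    using chi_other[OF mono j _ _ False] c1 by (intro sum.cong refl) auto
  also have "\<dots> = a j t" using j by simp
  finally show ?thesis by simp
qed

lemma pw_on:
  assumes mono: "\<forall>j<l. g j < g (Suc j)" and j: "j < l" and t: "t \<in> {g j<..<g (Suc j)}"
  shows "pw g l a t = a j t"
  using pw_chi[OF mono j, of a t] t by (simp add: chi_def)



lemma pw_defin:
  assumes mono: "\<forall>j<l. g j < g (Suc j)" and a: "\<forall>j<l. continuous_on UNIV (a j)"
    and z: "ip (pw g l a) (pw g l a) = 0"
  shows "pw g l a = (\<lambda>_. 0)"
proof
  fix t
  show "pw g l a t = 0"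
  proof (cases "\<exists>j<l. chi g j t \<noteq> 0")
    case False
    then show ?thesis unfolding pw_def by simp
  next
    case True
    then obtain j where j: "j < l" "chi g j t \<noteq> 0" by auto
    have tin: "t \<in> {g j<..<g (Suc j)}" using j by (auto simp: chi_def indicator_def split: if_splits)
    have aj: "continuous_on UNIV (a j)" using a j by auto
    have aa: "continuous_on UNIV (\<lambda>s. a j s * a j s)" using aj by (intro continuous_intros)
    let ?u = "pw g l a"
    have e: "(\<lambda>s. ?u s * ?u s * chi g j s) = (\<lambda>s. (a j s * a j s) * chi g j s)"
    proof
      fix s
      have "?u s * ?u s * chi g j s = ?u s * (a j s * chi g j s)"
        using pw_chi[OF mono j(1), of a s] by (simp add: mult.assoc)
      also have "\<dots> = a j s * (?u s * chi g j s)" by simp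
      also have "\<dots> = (a j s * a j s) * chi g j s"
        using pw_chi[OF mono j(1), of a s] by simp
      finally show "?u s * ?u s * chi g j s = (a j s * a j s) * chi g j s" .
    qed
    have i1: "(\<lambda>s. ?u s * ?u s * chi g j s) integrable_on UNIV" unfolding e using chi_int[OF aa] by simp
    have i2: "(\<lambda>s. ?u s * ?u s) integrable_on UNIV" using pw_int2[OF a a] .
    have "integral UNIV (\<lambda>s. ?u s * ?u s * chi g j s) \<le> integral UNIV (\<lambda>s. ?u s * ?u s)"
      by (rule integral_le[OF i1 i2]) (auto simp: chi_def indicator_def)
    then have le: "integral {g j..g (Suc j)} (\<lambda>s. a j s * a j s) \<le> 0"
      using z chi_int(2)[OF aa, of g j] unfolding e ip_def by simp
    have int: "(\<lambda>s. a j s * a j s) integrable_on {g j..g (Suc j)}"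
      by (rule integrable_continuous_real) (use aa continuous_on_subset in blast)
    have ge: "0 \<le> integral {g j..g (Suc j)} (\<lambda>s. a j s * a j s)"
      by (rule integral_nonneg[OF int]) simp
    have hi: "((\<lambda>s. a j s * a j s) has_integral 0) (cbox (g j) (g (Suc j)))"
      using le ge int has_integral_integral[of "\<lambda>s. a j s * a j s" "{g j..g (Suc j)}"]
      by (simp add: cbox_interval)
    have "a j t * a j t = 0"
      apply (rule has_integral_0_cbox_imp_0[OF _ _ hi])
      using aa continuous_on_subset tin by (auto simp: cbox_interval)
    then show ?thesis using pw_on[OF mono j(1) tin] by simp
  qed
qed



lemma C1_deriv:
  assumes "f C1_differentiable_on UNIV"
  shows "continuous_on UNIV (deriv f)" "(f has_real_derivative deriv f x) (at x)"
proof -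
  obtain D where D: "\<forall>x\<in>UNIV. (f has_vector_derivative D x) (at x)" "continuous_on UNIV D"
    using assms unfolding C1_differentiable_on_def by blast
  have "deriv f y = D y" for y
    using D(1) by (simp add: DERIV_imp_deriv has_real_derivative_iff_has_vector_derivative)
  then have e: "deriv f = D" by auto
  show "continuous_on UNIV (deriv f)" using D(2) e by simp
  show "(f has_real_derivative deriv f x) (at x)" using D(1) e
    by (simp add: has_real_derivative_iff_has_vector_derivative)
qed

lemma Vspan_sp: "Vspan lam = sp (\<lambda>h. h) lam"
  by (simp add: Vspan_def sp_def)

lemma Vspan_subsp: "subsp (Vspan lam)"
  unfolding Vspan_sp by (rule sp_subsp)

lemma subsp_U: "subsp (Uspace lam g l)"
proof -
  have V: "subsp (Vspan lam)" by (rule Vspan_subsp)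
  have 0: "(\<lambda>_. 0) \<in> Uspace lam g l"
  proof -
    have "(\<lambda>_::real. 0::real) = pw g l (\<lambda>_ _. 0)" by (rule ext) (simp add: pw_def)
    moreover have "\<forall>j<l. (\<lambda>_::real. 0::real) \<in> Vspan lam \<and> (\<lambda>_::real. 0::real) C1_differentiable_on UNIV"
      using V by (simp add: subsp_def)
    ultimately show ?thesis unfolding Uspace_def by blast
  qed
  have 1: "(\<lambda>t. x t + y t) \<in> Uspace lam g l" if xs: "x \<in> Uspace lam g l" and ys: "y \<in> Uspace lam g l" for x y
  proof -
    obtain w1 where w1: "x = pw g l w1" "\<forall>j<l. w1 j \<in> Vspan lam \<and> w1 j C1_differentiable_on UNIV"
      using xs unfolding Uspace_def by blast
    obtain w2 where w2: "y = pw g l w2" "\<forall>j<l. w2 j \<in> Vspan lam \<and> w2 j C1_differentiable_on UNIV"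
      using ys unfolding Uspace_def by blast
    have "(\<lambda>t. x t + y t) = pw g l (\<lambda>j t. w1 j t + w2 j t)"
      unfolding w1 w2 pw_def by (auto simp: sum.distrib algebra_simps)
    moreover have "\<forall>j<l. (\<lambda>t. w1 j t + w2 j t) \<in> Vspan lam \<and> (\<lambda>t. w1 j t + w2 j t) C1_differentiable_on UNIV"
      using w1 w2 V unfolding subsp_def by auto
    ultimately show ?thesis unfolding Uspace_def by blast
  qed
  have 2: "(\<lambda>t. a * x t) \<in> Uspace lam g l" if xs: "x \<in> Uspace lam g l" for x a
  proof -
    obtain w1 where w1: "x = pw g l w1" "\<forall>j<l. w1 j \<in> Vspan lam \<and> w1 j C1_differentiable_on UNIV"
      using xs unfolding Uspace_def by blast
    have "(\<lambda>t. a * x t) = pw g l (\<lambda>j t. a * w1 j t)"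
      unfolding w1 pw_def by (auto simp: sum_distrib_left algebra_simps)
    moreover have "\<forall>j<l. (\<lambda>t. a * w1 j t) \<in> Vspan lam \<and> (\<lambda>t. a * w1 j t) C1_differentiable_on UNIV"
      using w1 V unfolding subsp_def by auto
    ultimately show ?thesis unfolding Uspace_def by blast
  qed
  show ?thesis unfolding subsp_def using 0 1 2 by blast
qed

lemma U_sp: "Uspace lam g l \<subseteq> sp (\<lambda>i t. snd i t * chi g (fst i) t) ({..<l} \<times> lam)"
proof
  fix z assume "z \<in> Uspace lam g l"
  then obtain w where w: "z = pw g l w" "\<forall>j<l. w j \<in> Vspan lam"
    unfolding Uspace_def by blast
  have "\<forall>j\<in>{..<l}. \<exists>c. w j = (\<lambda>x. \<Sum>h\<in>lam. c h * h x)" using w(2) by (auto simp: Vspan_def)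
  then obtain C where C: "\<forall>j\<in>{..<l}. w j = (\<lambda>x. \<Sum>h\<in>lam. C j h * h x)"
    by (metis (no_types) bchoice)
  have "z = (\<lambda>t. \<Sum>i\<in>{..<l} \<times> lam. C (fst i) (snd i) * (snd i t * chi g (fst i) t))"
  proof
    fix t
    have "z t = (\<Sum>j<l. (\<Sum>h\<in>lam. C j h * h t) * chi g j t)"
      unfolding w(1) pw_def using C by (intro sum.cong refl) auto
    also have "\<dots> = (\<Sum>j<l. \<Sum>h\<in>lam. C j h * (h t * chi g j t))"
      by (simp add: sum_distrib_right mult.assoc)
    also have "\<dots> = (\<Sum>i\<in>{..<l} \<times> lam. C (fst i) (snd i) * (snd i t * chi g (fst i) t))"
      by (subst sum.cartesian_product) (simp add: split_def)
    finally show "z t = \<dots>" .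
  qed
  then show "z \<in> sp (\<lambda>i t. snd i t * chi g (fst i) t) ({..<l} \<times> lam)"
    unfolding sp_def mem_Collect_eq by (rule exI[of _ "\<lambda>i. C (fst i) (snd i)"])
qed

lemma U_G: "Uspace lam g l \<subseteq> Gset (Uspace lam g l)"
proof
  fix x assume xs: "x \<in> Uspace lam g l"
  obtain w1 where w1: "x = pw g l w1" "\<forall>j<l. w1 j C1_differentiable_on UNIV"
    using xs unfolding Uspace_def by blast
  show "x \<in> Gset (Uspace lam g l)"
    unfolding Gset_def mem_Collect_eq
  proof
    fix z assume zs: "z \<in> Uspace lam g l"
    obtain w2 where w2: "z = pw g l w2" "\<forall>j<l. w2 j C1_differentiable_on UNIV"
      using zs unfolding Uspace_def by blast
    show "(\<lambda>t. x t * z t) integrable_on UNIV" unfolding w1 w2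
      by (rule pw_int2) (use w1 w2 C1_differentiable_imp_continuous_on in blast)+
  qed
qed

lemma f_G:
  assumes "\<forall>j<l. v j C1_differentiable_on UNIV"
  shows "pw_deriv g l v \<in> Gset (Uspace lam g l)"
  unfolding Gset_def mem_Collect_eq
proof
  fix z assume zs: "z \<in> Uspace lam g l"
  obtain w2 where w2: "z = pw g l w2" "\<forall>j<l. w2 j C1_differentiable_on UNIV"
    using zs unfolding Uspace_def by blast
  show "(\<lambda>t. pw_deriv g l v t * z t) integrable_on UNIV" unfolding w2 pw_deriv_def
    by (rule pw_int2) (use w2 assms C1_differentiable_imp_continuous_on C1_deriv(1) in blast)+
qed

lemma defin_U:
  assumes mono: "\<forall>j<l. g j < g (Suc j)"
  shows "defin (Uspace lam g l)"
  unfolding defin_def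
proof (intro ballI impI)
  fix u assume us: "u \<in> Uspace lam g l" and z: "ip u u = 0"
  obtain w1 where w1: "u = pw g l w1" "\<forall>j<l. w1 j C1_differentiable_on UNIV"
    using us unfolding Uspace_def by blast
  show "u = (\<lambda>_. 0)" unfolding w1
    by (rule pw_defin[OF mono]) (use w1 z C1_differentiable_imp_continuous_on in auto)
qed

lemma pw_integrable:
  assumes "\<forall>j<l. continuous_on UNIV (a j)"
  shows "pw g l a integrable_on UNIV"
proof -
  have "(\<lambda>t. \<Sum>j<l. a j t * chi g j t) integrable_on UNIV"
    using assms by (intro integrable_sum chi_int) auto
  then show ?thesis unfolding pw_def .
qed

lemma int_pw_z1:
  assumes mono: "\<forall>j<l. g j < g (Suc j)" and a: "\<forall>j<l. continuous_on UNIV (a j)"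
    and nm: "m \<le> l"
  shows "integral UNIV (\<lambda>t. pw g l a t * pw g l (\<lambda>j t. if n \<le> j \<and> j < m then 1 else 0) t)
     = (\<Sum>j\<in>{n..<m}. integral {g j..g (Suc j)} (a j))"
proof -
  have e: "pw g l a t * pw g l (\<lambda>j t. if n \<le> j \<and> j < m then 1 else 0) t
      = (\<Sum>j\<in>{n..<m}. a j t * chi g j t)" for t
  proof -
    have "pw g l (\<lambda>j t. if n \<le> j \<and> j < m then 1 else 0) t
        = (\<Sum>j\<in>{..<l}. if j \<in> {n..<m} then chi g j t else 0)"
      unfolding pw_def by (intro sum.cong refl) auto
    also have "\<dots> = (\<Sum>j\<in>{..<l} \<inter> {n..<m}. chi g j t)"
      by (simp add: sum.inter_restrict)
    also have "{..<l} \<inter> {n..<m} = {n..<m}" using nm by auto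
    finally have "pw g l a t * pw g l (\<lambda>j t. if n \<le> j \<and> j < m then 1 else 0) t
        = (\<Sum>j\<in>{n..<m}. pw g l a t * chi g j t)" by (simp add: sum_distrib_left)
    also have "\<dots> = (\<Sum>j\<in>{n..<m}. a j t * chi g j t)"
      using nm by (intro sum.cong refl pw_chi[OF mono]) auto
    finally show ?thesis .
  qed
  have "integral UNIV (\<lambda>t. \<Sum>j\<in>{n..<m}. a j t * chi g j t) = (\<Sum>j\<in>{n..<m}. integral UNIV (\<lambda>t. a j t * chi g j t))"
    using a nm by (intro integral_sum chi_int) auto
  also have "\<dots> = (\<Sum>j\<in>{n..<m}. integral {g j..g (Suc j)} (a j))"
    using a nm by (intro sum.cong refl chi_int) auto
  finally show ?thesis unfolding e .
qed

lemma int_pw_piece: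
  assumes mono: "\<forall>j<l. g j < g (Suc j)" and j: "j < l"
  shows "integral {g j..g (Suc j)} (pw g l a) = integral {g j..g (Suc j)} (a j)"
proof -
  have "integral {g j<..<g (Suc j)} (pw g l a) = integral {g j<..<g (Suc j)} (a j)"
    by (rule integral_cong) (rule pw_on[OF mono j])
  then show ?thesis by (simp add: integral_open_interval_real)
qed

lemma int_pw_cc:
  assumes mono: "\<forall>j<l. g j < g (Suc j)" and a: "\<forall>j<l. continuous_on UNIV (a j)"
  shows "n \<le> m \<Longrightarrow> m \<le> l \<Longrightarrow> integral {g n..g m} (pw g l a) = (\<Sum>j\<in>{n..<m}. integral {g j..g (Suc j)} (a j))"
proof (induction m)
  case 0 then show ?case by simp
next
  case (Suc m)
  show ?case
  proof (cases "n = Suc m")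
    case True then show ?thesis by simp
  next
    case False
    then have nm: "n \<le> m" "m < l" using Suc.prems by auto
    have IH: "integral {g n..g m} (pw g l a) = (\<Sum>j\<in>{n..<m}. integral {g j..g (Suc j)} (a j))"
      using Suc.IH nm by simp
    have le1: "g n \<le> g m" using gmono[OF mono, of n m] nm by (cases "n = m") auto
    have le2: "g m \<le> g (Suc m)" using mono nm by auto
    have int: "pw g l a integrable_on {g n..g (Suc m)}"
      by (rule integrable_on_subinterval[OF pw_integrable[OF a]]) auto
    have "integral {g n..g (Suc m)} (pw g l a) = integral {g n..g m} (pw g l a) + integral {g m..g (Suc m)} (pw g l a)"
      using Henstock_Kurzweil_Integration.integral_combine[OF le1 le2 int] by simp
    also have "\<dots> = (\<Sum>j\<in>{n..<m}. integral {g j..g (Suc j)} (a j)) + integral {g m..g (Suc m)} (a m)"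
      using IH int_pw_piece[OF mono nm(2)] by simp
    also have "\<dots> = (\<Sum>j\<in>{n..<Suc m}. integral {g j..g (Suc j)} (a j))"
      using nm by simp
    finally show ?thesis .
  qed
qed

lemma cont_left_right:
  assumes "continuous_on UNIV f"
  shows "(f \<longlongrightarrow> f x) (at_left x)" "(f \<longlongrightarrow> f x) (at_right x)"
proof -
  have h: "(f \<longlongrightarrow> f x) (at x within UNIV)" using assms continuous_on_def by blast
  show "(f \<longlongrightarrow> f x) (at_left x)" by (rule tendsto_mono[OF at_le[OF subset_UNIV] h])
  show "(f \<longlongrightarrow> f x) (at_right x)" by (rule tendsto_mono[OF at_le[OF subset_UNIV] h])
qed

lemma Lim_left:
  assumes mono: "\<forall>j<l. g j < g (Suc j)" and i: "i < l" and c: "continuous_on UNIV (v i)"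
  shows "Lim (at_left (g (Suc i))) (pw g l v) = v i (g (Suc i))"
proof (rule tendsto_Lim[OF trivial_limit_at_left_real])
  have ev: "eventually (\<lambda>x. x \<in> {g i<..<g (Suc i)}) (at_left (g (Suc i)))"
    using mono i by (intro eventually_at_left_real) auto
  show "(pw g l v \<longlongrightarrow> v i (g (Suc i))) (at_left (g (Suc i)))"
    by (rule Lim_transform_eventually[OF cont_left_right(1)[OF c]])
       (rule eventually_mono[OF ev], simp add: pw_on[OF mono i])
qed

lemma Lim_right:
  assumes mono: "\<forall>j<l. g j < g (Suc j)" and i: "i < l" and c: "continuous_on UNIV (v i)"
  shows "Lim (at_right (g i)) (pw g l v) = v i (g i)"
proof (rule tendsto_Lim[OF trivial_limit_at_right_real])
  have ev: "eventually (\<lambda>x. x \<in> {g i<..<g (Suc i)}) (at_right (g i))"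
    using mono i by (intro eventually_at_right_real) auto
  show "(pw g l v \<longlongrightarrow> v i (g i)) (at_right (g i))"
    by (rule Lim_transform_eventually[OF cont_left_right(2)[OF c]])
       (rule eventually_mono[OF ev], simp add: pw_on[OF mono i])
qed

lemma ftc_piece:
  assumes "f C1_differentiable_on UNIV" "a \<le> b"
  shows "integral {a..b} (deriv f) = f b - f a"
proof -
  have "(deriv f has_integral (f b - f a)) {a..b}"
    apply (rule fundamental_theorem_of_calculus[OF assms(2)])
    using C1_deriv(2)[OF assms(1)]
    by (simp add: has_real_derivative_iff_has_vector_derivative has_vector_derivative_at_within)
  then show ?thesis by (rule integral_unique)
qed



lemma one_Vspan:
  assumes fin: "finite lam" and one: "(\<lambda>_. 1) \<in> lam"
  shows "(\<lambda>_. 1) \<in> Vspan lam"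
proof -
  let ?k = "\<lambda>_::real. 1::real"
  have "(\<Sum>h\<in>lam. (if h = ?k then 1 else 0) * h x) = 1" for x
  proof -
    have "(\<Sum>h\<in>lam. (if h = ?k then 1 else 0) * h x) = (\<Sum>h\<in>lam. if h = ?k then 1 else 0)"
      by (intro sum.cong refl) auto
    also have "\<dots> = 1" using fin one by (simp add: sum.delta')
    finally show ?thesis .
  qed
  then have "?k = (\<lambda>x. \<Sum>h\<in>lam. (if h = ?k then 1 else 0) * h x)" by auto
  then show ?thesis unfolding Vspan_def mem_Collect_eq
    by (rule exI[of _ "\<lambda>h. if h = ?k then 1 else 0"])
qed

lemma main_lam:
  assumes fin: "finite lam" and one: "(\<lambda>_. 1) \<in> lam" and mono: "\<forall>j<l. g j < g (Suc j)"
    and v: "\<forall>j<l. v j \<in> Vspan lam \<and> v j C1_differentiable_on UNIV"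
    and nm: "n \<le> l" "m \<le> l" "g n < g m"
  shows "integral {g n..g m} (D2 lam g l v) = (\<Sum>i\<in>{n..<m}.
              Lim (at_left (g (Suc i))) (pw g l v) - Lim (at_right (g i)) (pw g l v))"
proof -
  have nltm: "n < m"
  proof (rule ccontr)
    assume "\<not> n < m"
    then have "g m \<le> g n" using gmono[OF mono, of m n] nm by (cases "m = n") auto
    with nm show False by simp
  qed
  let ?U = "Uspace lam g l"
  let ?f = "pw_deriv g l v"
  have vC: "\<forall>j<l. v j C1_differentiable_on UNIV" using v by auto
  have finI: "finite ({..<l} \<times> lam)" using fin by simp
  have fG: "?f \<in> Gset ?U" by (rule f_G[OF vC])
  have char: "D2 lam g l v \<in> ?U \<and> (\<forall>z\<in>?U. ip (\<lambda>t. ?f t - D2 lam g l v t) z = 0)"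
    unfolding D2_def by (rule L2proj_char[OF finI subsp_U U_sp U_G defin_U[OF mono] fG])
  then obtain a where a: "D2 lam g l v = pw g l a" "\<forall>j<l. a j C1_differentiable_on UNIV"
    unfolding Uspace_def by blast
  have ac: "\<forall>j<l. continuous_on UNIV (a j)" using a(2) C1_differentiable_imp_continuous_on by blast
  define z1 where "z1 = pw g l (\<lambda>j t. if n \<le> j \<and> j < m then 1 else 0)"
  have V0: "(\<lambda>_. 0) \<in> Vspan lam" using Vspan_subsp[of lam] by (simp add: subsp_def)
  have V1: "(\<lambda>_. 1) \<in> Vspan lam" by (rule one_Vspan[OF fin one])
  have z1U: "z1 \<in> ?U"
  proof -
    have "\<forall>j<l. (\<lambda>t::real. if n \<le> j \<and> j < m then 1::real else 0) \<in> Vspan lam \<and>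
       (\<lambda>t::real. if n \<le> j \<and> j < m then 1::real else 0) C1_differentiable_on UNIV"
    proof (intro allI impI conjI)
      fix j show "(\<lambda>t::real. if n \<le> j \<and> j < m then 1::real else 0) \<in> Vspan lam"
        using V0 V1 by (cases "n \<le> j \<and> j < m") auto
    qed simp
    then show ?thesis unfolding z1_def Uspace_def by blast
  qed
  have DG: "D2 lam g l v \<in> Gset ?U" using char U_G by blast
  have "ip (\<lambda>t. ?f t - 1 * D2 lam g l v t) z1 = ip ?f z1 - 1 * ip (D2 lam g l v) z1"
    by (rule ip_lin1[OF fG DG z1U])
  then have eq: "ip ?f z1 = ip (D2 lam g l v) z1" using char z1U by simp
  have dC: "\<forall>j<l. continuous_on UNIV (deriv (v j))" using vC C1_deriv(1) by blast
  have "ip (D2 lam g l v) z1 = (\<Sum>j\<in>{n..<m}. integral {g j..g (Suc j)} (a j))"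
    unfolding a(1) z1_def ip_def by (rule int_pw_z1[OF mono ac nm(2)])
  also have "\<dots> = integral {g n..g m} (D2 lam g l v)"
    unfolding a(1) using int_pw_cc[OF mono ac] nltm nm by simp
  finally have L: "integral {g n..g m} (D2 lam g l v) = ip ?f z1" using eq by simp
  have "ip ?f z1 = (\<Sum>j\<in>{n..<m}. integral {g j..g (Suc j)} (deriv (v j)))"
    unfolding pw_deriv_def z1_def ip_def by (rule int_pw_z1[OF mono dC nm(2)])
  also have "\<dots> = (\<Sum>j\<in>{n..<m}. v j (g (Suc j)) - v j (g j))"
  proof (intro sum.cong refl)
    fix j assume "j \<in> {n..<m}"
    then have j: "j < l" using nm by auto
    show "integral {g j..g (Suc j)} (deriv (v j)) = v j (g (Suc j)) - v j (g j)"
      using ftc_piece[of "v j" "g j" "g (Suc j)"] vC mono j by (simp add: less_imp_le)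
  qed
  also have "\<dots> = (\<Sum>i\<in>{n..<m}.
              Lim (at_left (g (Suc i))) (pw g l v) - Lim (at_right (g i)) (pw g l v))"
  proof (intro sum.cong refl)
    fix j assume "j \<in> {n..<m}"
    then have j: "j < l" using nm by auto
    have c: "continuous_on UNIV (v j)" using vC j C1_differentiable_imp_continuous_on by blast
    show "v j (g (Suc j)) - v j (g j) = Lim (at_left (g (Suc j))) (pw g l v) - Lim (at_right (g j)) (pw g l v)"
      using Lim_left[of l g j v, OF mono j c] Lim_right[of l g j v, OF mono j c] by simp
  qed
  finally show ?thesis using L by simp
qed

theorem mainTheorem14:
  fixes L :: "idx filter" and beta eta :: "idx \<Rightarrow> real" and l :: "idx \<Rightarrow> nat"
    and g :: "idx \<Rightarrow> nat \<Rightarrow> real" and v :: "idx \<Rightarrow> nat \<Rightarrow> real \<Rightarrow> real"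
    and n m :: "idx \<Rightarrow> nat"
  assumes "fine_ultra L"
    and "hgrid L beta eta l g"
    and "eventually (\<lambda>lam. \<forall>j<l lam. v lam j \<in> Vspan lam
                                \<and> v lam j C1_differentiable_on UNIV) L"
    and "eventually (\<lambda>lam. n lam \<le> l lam \<and> m lam \<le> l lam
                           \<and> g lam (n lam) < g lam (m lam)) L"
  shows "eventually (\<lambda>lam.
           integral {g lam (n lam) .. g lam (m lam)} (D2 lam (g lam) (l lam) (v lam))
         = (\<Sum>i\<in>{n lam..<m lam}.
              Lim (at_left (g lam (Suc i))) (pw (g lam) (l lam) (v lam))
            - Lim (at_right (g lam i)) (pw (g lam) (l lam) (v lam)))) L"
proof -
  have E1: "eventually finite L" using assms(1) unfolding fine_ultra_def by blast
  have E2: "eventually (\<lambda>lam. {\<lambda>_::real. 1::real} \<subseteq> lam) L"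
    using assms(1) unfolding fine_ultra_def by blast
  have E3: "eventually (\<lambda>lam. \<forall>j<l lam. 0 < g lam (Suc j) - g lam j \<and> g lam (Suc j) - g lam j < eta lam) L"
    using assms(2) unfolding hgrid_def by (auto elim: eventually_mono)
  have "eventually (\<lambda>lam. finite lam \<and> {\<lambda>_::real. 1::real} \<subseteq> lam \<and>
     (\<forall>j<l lam. 0 < g lam (Suc j) - g lam j \<and> g lam (Suc j) - g lam j < eta lam) \<and>
     (\<forall>j<l lam. v lam j \<in> Vspan lam \<and> v lam j C1_differentiable_on UNIV) \<and>
     (n lam \<le> l lam \<and> m lam \<le> l lam \<and> g lam (n lam) < g lam (m lam))) L"
    by (rule eventually_conj[OF E1 eventually_conj[OF E2 eventually_conj[OF E3 eventually_conj[OF assms(3) assms(4)]]]])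
  then show ?thesis
  proof (rule eventually_mono)
    fix lam assume h: "finite lam \<and> {\<lambda>_::real. 1::real} \<subseteq> lam \<and>
     (\<forall>j<l lam. 0 < g lam (Suc j) - g lam j \<and> g lam (Suc j) - g lam j < eta lam) \<and>
     (\<forall>j<l lam. v lam j \<in> Vspan lam \<and> v lam j C1_differentiable_on UNIV) \<and>
     (n lam \<le> l lam \<and> m lam \<le> l lam \<and> g lam (n lam) < g lam (m lam))"
    have mono: "\<forall>j<l lam. g lam j < g lam (Suc j)" using h by auto
    show "integral {g lam (n lam) .. g lam (m lam)} (D2 lam (g lam) (l lam) (v lam))
         = (\<Sum>i\<in>{n lam..<m lam}.
              Lim (at_left (g lam (Suc i))) (pw (g lam) (l lam) (v lam))
            - Lim (at_right (g lam i)) (pw (g lam) (l lam) (v lam)))"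
      by (rule main_lam) (use h mono in auto)
  qed
qed


end
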